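(* Let $(A,\alpha_A)$ be a Hom-algebra and $(H,\alpha_H)$ a Hom-coalgebra (finite-dimensional, with bijective structure maps). Let $\varphi:{A^*}^{cop}\otimes H\to H\otimes{A^*}^{cop}$, $\varphi(f\otimes h)=\sum h^\varphi\otimes f^\varphi$, and $\Phi:H\otimes A\to A\otimes H$, $\Phi(h\otimes a)=\sum a_\Phi\otimes h^\Phi$, be linear maps corresponding to each other via $\sum f(a_\Phi)h^\Phi=\sum f^\varphi(a)h^\varphi$ for all $f\in A^*$, $a\in A$, $h\in H$ (this is a bijection between such linear maps). Then $\varphi$ is a Hom-cotwistor if and only if $(\alpha_A\otimes\alpha_H)\circ\Phi=\Phi\circ(\alpha_H\otimes\alpha_A)$ and, for all $a,b\in A$, $h\in H$: (E1) $(m_A\otimes\alpha_H)\big((\mathrm{id}_A\otimes\Phi)(\Phi\otimes\mathrm{id}_A)(h\otimes a\otimes b)\big)=\Phi(\alpha_H(h)\otimes ab)$, i.e. $\sum a_\Phi b_\Psi\otimes\alpha_H((h^\Phi)^\Psi)=\sum(ab)_\Phi\otimes\alpha_H(h)^\Phi$; (E2) $(\Phi\otimes\mathrm{id}_H)(\mathrm{id}_H\otimes\Phi)(\Delta_H(h)\otimes\alpha_A(a))=(\alpha_A\otimes\Delta_H)(\Phi(h\otimes a))$; (E3) $(\mathrm{id}_A\otimes\varepsilon_H)(\Phi(h\otimes a))=\varepsilon_H(h)a$; (E4) $\Phi(h\otimes1_A)=1_A\otimes h$.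
   Context: $\Bbbk$ field of characteristic $0$; vector spaces finite-dimensional. Hom-algebra $(A,\mu,1_A,\alpha_A)$: $\alpha_A(a)(bc)=(ab)\alpha_A(c)$, $\alpha_A(1_A)=1_A$, $1_Aa=a1_A=\alpha_A(a)$; $m_A$ denotes multiplication. Hom-coalgebra $(C,\alpha,\Delta,\varepsilon)$: $\varepsilon\alpha=\varepsilon$, $\alpha(c_1)\otimes\Delta(c_2)=\Delta(c_1)\otimes\alpha(c_2)$, $\varepsilon(c_1)c_2=c_1\varepsilon(c_2)=\alpha(c)$. ${A^*}^{cop}$ is the Hom-coalgebra on $A^*$ with $\overline\varepsilon(f)=f(1_A)$, $\overline\Delta(f)\in A^*\otimes A^*\cong(A\otimes A)^*$ given by $\overline\Delta(f)(x\otimes y)=f(\alpha_A^{-2}(yx))$, and $\alpha_{{A^*}^{cop}}(f)=f\circ\alpha_A^{-1}$. For Hom-coalgebras $B,H$, a Hom-cotwistor is a linear $\varphi:B\otimes H\to H\otimes B$ with $\varphi\circ(\alpha_B\otimes\alpha_H)=(\alpha_H\otimes\alpha_B)\circ\varphi$ and (M1) $((\varphi\otimes\mathrm{id}_B)(\mathrm{id}_B\otimes\varphi))(\Delta_B(b)\otimes\alpha_H(h))=(\alpha_H\otimes\Delta_B)\varphi(b\otimes h)$; (M2) $((\mathrm{id}_H\otimes\varphi)(\varphi\otimes\mathrm{id}_H))(\alpha_B(b)\otimes\Delta_H(h))=(\Delta_H\otimes\alpha_B)\varphi(b\otimes h)$; (M3) $(\varepsilon_H\otimes\mathrm{id})\varphi(b\otimes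 h)=\varepsilon_H(h)b$; (M4) $(\mathrm{id}\otimes\varepsilon_B)\varphi(b\otimes h)=\varepsilon_B(b)h$ (here $B={A^*}^{cop}$). *)

theory Defs
  imports Main
begin

text \<open>Finite-dimensional vector spaces over a field 'k are modelled in coordinates:
  a space with basis indexed by a finite type 'a is the coordinate space 'a => 'k.
  The tensor product of the spaces indexed by 'a and 'b is the space indexed by 'a * 'b,
  with pure tensors given by tens.\<close>

definition ev :: "'a \<Rightarrow> 'a \<Rightarrow> 'k::field" where
  "ev a = (\<lambda>b. if b = a then 1 else 0)"

definition tens :: "('a \<Rightarrow> 'k::field) \<Rightarrow> ('b \<Rightarrow> 'k) \<Rightarrow> ('a \<times> 'b \<Rightarrow> 'k)" where
  "tens x y = (\<lambda>(a, b). x a * y b)"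

text \<open>Evaluation f(x) of a functional f in A* (coordinates w.r.t. the dual basis) at x in A.\<close>
definition pair :: "('a::finite \<Rightarrow> 'k::field) \<Rightarrow> ('a \<Rightarrow> 'k) \<Rightarrow> 'k" where
  "pair f x = (\<Sum>a\<in>UNIV. f a * x a)"

definition lin :: "(('a \<Rightarrow> 'k::field) \<Rightarrow> ('b \<Rightarrow> 'k)) \<Rightarrow> bool" where
  "lin f \<longleftrightarrow> (\<forall>x y c. f (\<lambda>a. c * x a + y a) = (\<lambda>b. c * f x b + f y b))"

definition lin1 :: "(('a \<Rightarrow> 'k::field) \<Rightarrow> 'k) \<Rightarrow> bool" where
  "lin1 f \<longleftrightarrow> (\<forall>x y c. f (\<lambda>a. c * x a + y a) = c * f x + f y)"

definition bilin :: "(('a \<Rightarrow> 'k::field) \<Rightarrow> ('b \<Rightarrow> 'k) \<Rightarrow> ('c \<Rightarrow> 'k)) \<Rightarrow> bool" where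
  "bilin m \<longleftrightarrow> (\<forall>x. lin (m x)) \<and> (\<forall>y. lin (\<lambda>x. m x y))"

definition tmap :: "(('a \<Rightarrow> 'k::field) \<Rightarrow> ('c \<Rightarrow> 'k)) \<Rightarrow> (('b \<Rightarrow> 'k) \<Rightarrow> ('d \<Rightarrow> 'k))
    \<Rightarrow> ('a::finite \<times> 'b::finite \<Rightarrow> 'k) \<Rightarrow> ('c \<times> 'd \<Rightarrow> 'k)" where
  "tmap f g w = (\<lambda>(c, d). \<Sum>p\<in>UNIV. w p * f (ev (fst p)) c * g (ev (snd p)) d)"

definition assocL :: "('a \<times> ('b \<times> 'c) \<Rightarrow> 'k) \<Rightarrow> (('a \<times> 'b) \<times> 'c \<Rightarrow> 'k)" where
  "assocL w = (\<lambda>((a, b), c). w (a, (b, c)))"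

definition assocR :: "(('a \<times> 'b) \<times> 'c \<Rightarrow> 'k) \<Rightarrow> ('a \<times> ('b \<times> 'c) \<Rightarrow> 'k)" where
  "assocR w = (\<lambda>(a, (b, c)). w ((a, b), c))"

text \<open>(e (x) id) and (id (x) e) for a linear functional e, followed by k (x) V = V = V (x) k.\<close>
definition contrL :: "(('a::finite \<Rightarrow> 'k::field) \<Rightarrow> 'k) \<Rightarrow> ('a \<times> 'b \<Rightarrow> 'k) \<Rightarrow> ('b \<Rightarrow> 'k)" where
  "contrL e w = (\<lambda>b. \<Sum>a\<in>UNIV. w (a, b) * e (ev a))"

definition contrR :: "(('b::finite \<Rightarrow> 'k::field) \<Rightarrow> 'k) \<Rightarrow> ('a \<times> 'b \<Rightarrow> 'k) \<Rightarrow> ('a \<Rightarrow> 'k)" where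
  "contrR e w = (\<lambda>a. \<Sum>b\<in>UNIV. w (a, b) * e (ev b))"

definition mlin :: "(('a::finite \<Rightarrow> 'k::field) \<Rightarrow> ('a \<Rightarrow> 'k) \<Rightarrow> ('a \<Rightarrow> 'k))
    \<Rightarrow> ('a \<times> 'a \<Rightarrow> 'k) \<Rightarrow> ('a \<Rightarrow> 'k)" where
  "mlin m w = (\<lambda>c. \<Sum>p\<in>UNIV. w p * m (ev (fst p)) (ev (snd p)) c)"

definition hom_algebra :: "(('a::finite \<Rightarrow> 'k::field) \<Rightarrow> ('a \<Rightarrow> 'k) \<Rightarrow> ('a \<Rightarrow> 'k))
    \<Rightarrow> ('a \<Rightarrow> 'k) \<Rightarrow> (('a \<Rightarrow> 'k) \<Rightarrow> ('a \<Rightarrow> 'k)) \<Rightarrow> bool" where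
  "hom_algebra m one alpha \<longleftrightarrow>
     bilin m \<and> lin alpha \<and> bij alpha \<and>
     (\<forall>a b c. m (alpha a) (m b c) = m (m a b) (alpha c)) \<and>
     alpha one = one \<and>
     (\<forall>a. m one a = alpha a \<and> m a one = alpha a)"

definition hom_coalgebra :: "(('c::finite \<Rightarrow> 'k::field) \<Rightarrow> ('c \<Rightarrow> 'k))
    \<Rightarrow> (('c \<Rightarrow> 'k) \<Rightarrow> ('c \<times> 'c \<Rightarrow> 'k)) \<Rightarrow> (('c \<Rightarrow> 'k) \<Rightarrow> 'k) \<Rightarrow> bool" where
  "hom_coalgebra alpha delta eps \<longleftrightarrow>
     lin alpha \<and> bij alpha \<and> lin delta \<and> lin1 eps \<and>
     (\<forall>c. eps (alpha c) = eps c) \<and>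
     (\<forall>c. tmap alpha delta (delta c) = assocR (tmap delta alpha (delta c))) \<and>
     (\<forall>c. contrL eps (delta c) = alpha c \<and> contrR eps (delta c) = alpha c)"

text \<open>The Hom-coalgebra (A*)^cop, elements of A* in dual-basis coordinates;
  A* (x) A* = (A (x) A)* in the induced coordinates.\<close>
definition dual_eps :: "('a::finite \<Rightarrow> 'k::field) \<Rightarrow> ('a \<Rightarrow> 'k) \<Rightarrow> 'k" where
  "dual_eps one f = pair f one"

definition dual_delta :: "(('a::finite \<Rightarrow> 'k::field) \<Rightarrow> ('a \<Rightarrow> 'k) \<Rightarrow> ('a \<Rightarrow> 'k))
    \<Rightarrow> (('a \<Rightarrow> 'k) \<Rightarrow> ('a \<Rightarrow> 'k)) \<Rightarrow> ('a \<Rightarrow> 'k) \<Rightarrow> ('a \<times> 'a \<Rightarrow> 'k)" where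
  "dual_delta m alpha f = (\<lambda>(x, y). pair f (inv alpha (inv alpha (m (ev y) (ev x)))))"

definition dual_alpha :: "(('a::finite \<Rightarrow> 'k::field) \<Rightarrow> ('a \<Rightarrow> 'k)) \<Rightarrow> ('a \<Rightarrow> 'k) \<Rightarrow> ('a \<Rightarrow> 'k)" where
  "dual_alpha alpha f = (\<lambda>i. pair f (inv alpha (ev i)))"

definition hom_cotwistor :: "(('b::finite \<Rightarrow> 'k::field) \<Rightarrow> ('b \<Rightarrow> 'k))
    \<Rightarrow> (('b \<Rightarrow> 'k) \<Rightarrow> ('b \<times> 'b \<Rightarrow> 'k)) \<Rightarrow> (('b \<Rightarrow> 'k) \<Rightarrow> 'k)
    \<Rightarrow> (('h::finite \<Rightarrow> 'k) \<Rightarrow> ('h \<Rightarrow> 'k))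
    \<Rightarrow> (('h \<Rightarrow> 'k) \<Rightarrow> ('h \<times> 'h \<Rightarrow> 'k)) \<Rightarrow> (('h \<Rightarrow> 'k) \<Rightarrow> 'k)
    \<Rightarrow> (('b \<times> 'h \<Rightarrow> 'k) \<Rightarrow> ('h \<times> 'b \<Rightarrow> 'k)) \<Rightarrow> bool" where
  "hom_cotwistor aB dB eB aH dH eH phi \<longleftrightarrow>
     lin phi \<and>
     (\<forall>w. phi (tmap aB aH w) = tmap aH aB (phi w)) \<and>
     (\<forall>b h. assocR (tmap phi id (assocL (tmap id phi (assocR (tens (dB b) (aH h))))))
              = tmap aH dB (phi (tens b h))) \<and>
     (\<forall>b h. assocL (tmap id phi (assocR (tmap phi id (assocL (tens (aB b) (dH h))))))
              = tmap dH aB (phi (tens b h))) \<and>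
     (\<forall>b h. contrL eH (phi (tens b h)) = (\<lambda>i. eH h * b i)) \<and>
     (\<forall>b h. contrR eB (phi (tens b h)) = (\<lambda>j. eB b * h j))"

end

theory Submission
  imports Defs
begin


lemma ev_mult: "ev a b * (x::'k::field) = (if b = a then x else 0)" "x * ev a b = (if b = a then x else 0)"
  by (simp_all add: ev_def)

lemma sum_ev_r[simp]: "(\<Sum>s\<in>(UNIV::'a::finite set). x s * ev s a) = (x a :: 'k::field)"
  by (simp add: ev_mult sum.delta sum.delta')

lemma sum_ev_l[simp]: "(\<Sum>s\<in>(UNIV::'a::finite set). ev s a * x s) = (x a :: 'k::field)"
  by (simp add: ev_mult sum.delta sum.delta')

lemma sum_ev_r'[simp]: "(\<Sum>s\<in>(UNIV::'a::finite set). x s * ev a s) = (x a :: 'k::field)"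
  by (simp add: ev_mult sum.delta sum.delta')

lemma sum_ev_l'[simp]: "(\<Sum>s\<in>(UNIV::'a::finite set). ev a s * x s) = (x a :: 'k::field)"
  by (simp add: ev_mult sum.delta sum.delta')

lemma sum_UNIV_prod: "(\<Sum>p\<in>(UNIV::('a::finite\<times>'b::finite) set). g p) = (\<Sum>a\<in>UNIV. \<Sum>b\<in>UNIV. g (a,b))"
  by (simp add: UNIV_Times_UNIV[symmetric] sum.cartesian_product del: UNIV_Times_UNIV)

lemma linD: "lin f \<Longrightarrow> f (\<lambda>a. c * x a + y a) = (\<lambda>b. c * f x b + f y b)"
  unfolding lin_def by blast

lemma lin_zero: assumes "lin f" shows "f (\<lambda>_. 0) = (\<lambda>_. 0)"
proof -
  have "f (\<lambda>_. 0) = (\<lambda>b. f (\<lambda>_. 0) b + f (\<lambda>_. 0) b)"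
    using linD[OF assms, of 1 "\<lambda>_. 0" "\<lambda>_. 0"] by (simp only: mult_1 add_0_right)
  hence "\<And>b. f (\<lambda>_. 0) b = f (\<lambda>_. 0) b + f (\<lambda>_. 0) b" by (metis)
  thus ?thesis by (metis add_cancel_right_right)
qed

lemma lin_sum: assumes "lin f" and "finite S"
  shows "f (\<lambda>a. \<Sum>s\<in>S. c s * x s a) = (\<lambda>b. \<Sum>s\<in>S. c s * f (x s) b)"
  using assms(2)
proof (induction S rule: finite_induct)
  case empty then show ?case using lin_zero[OF assms(1)] by simp
next
  case (insert t S)
  have "f (\<lambda>a. \<Sum>s\<in>insert t S. c s * x s a) = f (\<lambda>a. c t * x t a + (\<lambda>a. \<Sum>s\<in>S. c s * x s a) a)"
    using insert by simp
  also have "\<dots> = (\<lambda>b. c t * f (x t) b + f (\<lambda>a. \<Sum>s\<in>S. c s * x s a) b)"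
    by (rule linD[OF assms(1)])
  finally show ?case using insert by simp
qed

lemma vec_expand: "x = (\<lambda>a. \<Sum>s\<in>(UNIV::'a::finite set). x s * ev s a :: 'k::field)"
  by (rule ext) simp

lemma lin_expand: assumes "lin (f :: ('a::finite \<Rightarrow> 'k::field) \<Rightarrow> _)"
  shows "f x = (\<lambda>b. \<Sum>s\<in>UNIV. x s * f (ev s) b)"
proof -
  have "f x = f (\<lambda>a. \<Sum>s\<in>UNIV. x s * ev s a)" by simp
  also have "\<dots> = (\<lambda>b. \<Sum>s\<in>UNIV. x s * f (ev s) b)" by (rule lin_sum[OF assms]) simp
  finally show ?thesis .
qed

lemma lin_ext: assumes "lin (f :: ('a::finite \<Rightarrow> 'k::field) \<Rightarrow> _)" "lin g" "\<And>s. f (ev s) = g (ev s)"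
  shows "f = g"
  by (rule ext, subst lin_expand[OF assms(1)], subst lin_expand[OF assms(2)]) (simp add: assms(3))

lemma lin1D: "lin1 f \<Longrightarrow> f (\<lambda>a. c * x a + y a) = c * f x + f y"
  unfolding lin1_def by blast

lemma lin1_expand: assumes "lin1 (e :: ('a::finite \<Rightarrow> 'k::field) \<Rightarrow> 'k)"
  shows "e x = (\<Sum>s\<in>UNIV. x s * e (ev s))"
proof -
  have z: "e (\<lambda>_. 0) = 0"
  proof -
    have "e (\<lambda>a. 1 * (\<lambda>_. 0) a + (\<lambda>_. 0) a) = 1 * e (\<lambda>_. 0) + e (\<lambda>_. 0)" by (rule lin1D[OF assms])
    hence "e (\<lambda>_. 0) = e (\<lambda>_. 0) + e (\<lambda>_. 0)" by (simp only: mult_1 add_0_right)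
    thus ?thesis by (metis add_cancel_right_right)
  qed
  have "\<And>S. finite S \<Longrightarrow> e (\<lambda>a. \<Sum>s\<in>S. x s * ev s a) = (\<Sum>s\<in>S. x s * e (ev s))"
  proof -
    fix S :: "'a set" assume "finite S"
    thus "e (\<lambda>a. \<Sum>s\<in>S. x s * ev s a) = (\<Sum>s\<in>S. x s * e (ev s))"
    proof (induction S rule: finite_induct)
      case empty then show ?case using z by simp
    next
      case (insert t S)
      have "e (\<lambda>a. \<Sum>s\<in>insert t S. x s * ev s a) = e (\<lambda>a. x t * ev t a + (\<lambda>a. \<Sum>s\<in>S. x s * ev s a) a)"
        using insert by simp
      also have "\<dots> = x t * e (ev t) + e (\<lambda>a. \<Sum>s\<in>S. x s * ev s a)" by (rule lin1D[OF assms])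
      finally show ?case using insert by simp
    qed
  qed
  from this[of UNIV] show ?thesis by simp
qed

lemma lin_id[simp]: "lin id" by (simp add: lin_def)
lemma lin_id'[simp]: "lin (\<lambda>x. x)" by (simp add: lin_def)
lemma lin_comp: "lin f \<Longrightarrow> lin g \<Longrightarrow> lin (f \<circ> g)" by (simp add: lin_def)
lemma lin_comp': "lin f \<Longrightarrow> lin g \<Longrightarrow> lin (\<lambda>x. f (g x))" by (simp add: lin_def)

lemma lin_tmap[simp]: "lin (tmap f g)"
  by (simp add: lin_def tmap_def fun_eq_iff sum_distrib_left sum.distrib algebra_simps split: prod.splits)
lemma lin_assocL[simp]: "lin assocL"
  by (simp add: lin_def assocL_def fun_eq_iff split: prod.splits)
lemma lin_assocR[simp]: "lin assocR"
  by (simp add: lin_def assocR_def fun_eq_iff split: prod.splits)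

lemma lin_inv: assumes "lin f" "bij f" shows "lin (inv f)"
  unfolding lin_def
proof (intro allI)
  fix x y c
  have "f (\<lambda>b. c * inv f x b + inv f y b) = (\<lambda>b. c * f (inv f x) b + f (inv f y) b)" by (rule linD[OF assms(1)])
  also have "\<dots> = (\<lambda>a. c * x a + y a)" using assms(2) by (simp add: bij_is_surj surj_f_inv_f)
  finally have "f (\<lambda>b. c * inv f x b + inv f y b) = (\<lambda>a. c * x a + y a)" .
  thus "inv f (\<lambda>a. c * x a + y a) = (\<lambda>b. c * inv f x b + inv f y b)"
    using assms(2) by (metis bij_inv_eq_iff)
qed

lemma tens_ev[simp]: "tens (ev a) (ev b) = (ev (a,b) :: _ \<Rightarrow> 'k::field)"
  by (auto simp: tens_def ev_def fun_eq_iff)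

lemma tmap_ev: "tmap f g (ev (a,b)) = tens (f (ev a)) (g (ev b))"
  by (simp add: tmap_def tens_def fun_eq_iff mult.assoc del: ev_mult)

lemma tmap_ev': "tmap f g (ev s) = tens (f (ev (fst s))) (g (ev (snd s)))"
  by (cases s) (simp add: tmap_ev)

lemma tmap_tens: assumes "lin f" "lin g"
  shows "tmap f g (tens x y) = tens (f x) (g y)"
proof -
  have "tmap f g (tens x y) = (\<lambda>(c,d). (\<Sum>a\<in>UNIV. x a * f (ev a) c) * (\<Sum>b\<in>UNIV. y b * g (ev b) d))"
    by (simp add: tmap_def tens_def fun_eq_iff sum_UNIV_prod sum_product mult_ac)
  also have "\<dots> = tens (f x) (g y)"
    by (simp add: tens_def fun_eq_iff lin_expand[OF assms(1), of x] lin_expand[OF assms(2), of y])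
  finally show ?thesis .
qed

lemma tmap_comp: assumes "lin f" "lin g"
  shows "tmap f g (tmap f' g' w) = tmap (f \<circ> f') (g \<circ> g') w"
proof -
  have "(\<lambda>w. tmap f g (tmap f' g' w)) = tmap (f \<circ> f') (g \<circ> g')"
    by (rule lin_ext[OF lin_comp'[OF lin_tmap lin_tmap] lin_tmap]) (simp add: tmap_ev' tmap_tens[OF assms])
  from fun_cong[OF this, of w] show ?thesis by simp
qed

lemma tmap_id_id[simp]: "tmap id id w = (w :: _ \<Rightarrow> 'k::field)"
proof -
  have "tmap id id = (\<lambda>w::_ \<Rightarrow> 'k. w)" by (rule lin_ext[OF lin_tmap lin_id']) (simp add: tmap_ev')
  from fun_cong[OF this, of w] show ?thesis by simp
qed

lemma tmap_id_id'[simp]: "tmap (\<lambda>x. x) (\<lambda>x. x) w = (w :: _ \<Rightarrow> 'k::field)"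
  using tmap_id_id[of w] by (simp add: id_def)

lemma lam_id[simp]: "(\<lambda>x. x) = id" by (simp add: id_def)

lemma tmap_coord: "tmap f g w = (\<lambda>(c,d). \<Sum>a\<in>UNIV. \<Sum>b\<in>UNIV. w (a,b) * f (ev a) c * g (ev b) d)"
  by (simp add: tmap_def fun_eq_iff sum_UNIV_prod)

lemma sum_ev_r2[simp]: "(\<Sum>s\<in>(UNIV::'a::finite set). x s * ev s a * y) = (x a * y :: 'k::field)"
  by (simp add: sum_distrib_right[symmetric])

lemma tmap_idL: "tmap id g w = (\<lambda>(c,d). \<Sum>b\<in>UNIV. w (c,b) * g (ev b) d)"
  by (simp add: tmap_coord fun_eq_iff) (subst sum.swap, simp)
lemma tmap_idR: "tmap f id w = (\<lambda>(c,d). \<Sum>a\<in>UNIV. w (a,d) * f (ev a) c)"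
  by (simp add: tmap_coord fun_eq_iff)

lemma if_mult0[simp]: "(if P then x else 0) * (y::'k::field) = (if P then x * y else 0)"
  "y * (if P then x else 0) = (if P then y * x else 0)" by auto

lemma sum_if_out: "(\<Sum>s\<in>A. if P then f s else 0) = (if P then \<Sum>s\<in>A. f s else 0)"
  by auto

lemma ev_pair: "ev (a,b) (c,d) = (ev a c * ev b d :: 'k::field)"
  by (simp add: ev_def)

lemmas coll = ev_pair ev_mult if_mult0 sum_if_out sum.delta sum.delta'

lemma tens_basis_iff: assumes "lin (L :: ('a::finite \<times> 'b::finite \<Rightarrow> 'k::field) \<Rightarrow> _)" "lin R"
  shows "(\<forall>x y. L (tens x y) = R (tens x y)) \<longleftrightarrow> (\<forall>a b c. L (ev (a,b)) c = R (ev (a,b)) c)"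
proof
  assume "\<forall>x y. L (tens x y) = R (tens x y)"
  thus "\<forall>a b c. L (ev (a,b)) c = R (ev (a,b)) c" by (metis tens_ev)
next
  assume h: "\<forall>a b c. L (ev (a,b)) c = R (ev (a,b)) c"
  have "L = R" by (rule lin_ext[OF assms]) (use h in \<open>auto simp: fun_eq_iff\<close>)
  thus "\<forall>x y. L (tens x y) = R (tens x y)" by simp
qed

lemma all_basis_iff: assumes "lin (L :: ('a::finite \<Rightarrow> 'k::field) \<Rightarrow> _)" "lin R"
  shows "(\<forall>x. L x = R x) \<longleftrightarrow> (\<forall>a c. L (ev a) c = R (ev a) c)"
proof
  assume h: "\<forall>a c. L (ev a) c = R (ev a) c"
  have "L = R" by (rule lin_ext[OF assms]) (use h in \<open>auto simp: fun_eq_iff\<close>)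
  thus "\<forall>x. L x = R x" by simp
qed simp

lemma pair_ev[simp]: "pair (ev i) v = (v i :: 'k::field)"
  by (simp add: pair_def)

lemma mlin_ev: "mlin m (ev (a,b)) = m (ev a) (ev b)"
  by (simp add: mlin_def fun_eq_iff)

lemma mlin_ev': "mlin m (ev s) = m (ev (fst s)) (ev (snd s))"
  by (cases s) (simp add: mlin_ev)

lemma lin_mlin[simp]: "lin (mlin m)"
  by (simp add: lin_def mlin_def fun_eq_iff sum_distrib_left sum.distrib algebra_simps)

lemma mlin_tens: assumes "bilin m" shows "mlin m (tens a b) = m a b"
proof -
  have l1: "\<And>x. lin (m x)" and l2: "\<And>y. lin (\<lambda>x. m x y)" using assms by (auto simp: bilin_def)
  have "m a b = (\<lambda>c. \<Sum>y\<in>UNIV. b y * m a (ev y) c)" by (rule lin_expand[OF l1])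
  also have "\<dots> = (\<lambda>c. \<Sum>y\<in>UNIV. b y * (\<Sum>x\<in>UNIV. a x * m (ev x) (ev y) c))"
    by (subst lin_expand[OF l2, of a]) simp
  also have "\<dots> = mlin m (tens a b)"
    by (simp add: mlin_def tens_def fun_eq_iff sum_UNIV_prod sum_distrib_left mult_ac) (subst sum.swap, simp)
  finally show ?thesis by simp
qed

lemma lin_contrL[simp]: "lin (contrL e)"
  by (simp add: lin_def contrL_def fun_eq_iff sum_distrib_left sum.distrib algebra_simps)
lemma lin_contrR[simp]: "lin (contrR e)"
  by (simp add: lin_def contrR_def fun_eq_iff sum_distrib_left sum.distrib algebra_simps)
lemma lin_tensL[simp]: "lin (\<lambda>x. tens x y)"
  by (simp add: lin_def tens_def fun_eq_iff algebra_simps)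
lemma lin_tensR[simp]: "lin (\<lambda>y. tens x y)"
  by (simp add: lin_def tens_def fun_eq_iff algebra_simps)
lemma contrR_tens: "lin1 e \<Longrightarrow> contrR e (tens x y) = (\<lambda>a. x a * e y)"
  by (simp add: contrR_def tens_def fun_eq_iff lin1_expand[of e y] sum_distrib_right sum_distrib_left mult_ac)
lemma contrL_tens: "lin1 e \<Longrightarrow> contrL e (tens x y) = (\<lambda>b. e x * y b)"
  by (simp add: contrL_def tens_def fun_eq_iff lin1_expand[of e x] sum_distrib_right sum_distrib_left mult_ac)

lemma sum4_perm: "(\<Sum>a\<in>A. \<Sum>b\<in>B. \<Sum>c\<in>C. \<Sum>d\<in>D. F a b c d) = (\<Sum>c\<in>C. \<Sum>d\<in>D. \<Sum>a\<in>A. \<Sum>b\<in>B. F a b c d)"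
proof -
  have "(\<Sum>a\<in>A. \<Sum>b\<in>B. \<Sum>c\<in>C. \<Sum>d\<in>D. F a b c d) = (\<Sum>a\<in>A. \<Sum>c\<in>C. \<Sum>b\<in>B. \<Sum>d\<in>D. F a b c d)"
    by (rule sum.cong[OF refl], rule sum.swap)
  also have "\<dots> = (\<Sum>a\<in>A. \<Sum>c\<in>C. \<Sum>d\<in>D. \<Sum>b\<in>B. F a b c d)"
    by (rule sum.cong[OF refl], rule sum.cong[OF refl], rule sum.swap)
  also have "\<dots> = (\<Sum>c\<in>C. \<Sum>a\<in>A. \<Sum>d\<in>D. \<Sum>b\<in>B. F a b c d)"
    by (rule sum.swap)
  also have "\<dots> = (\<Sum>c\<in>C. \<Sum>d\<in>D. \<Sum>a\<in>A. \<Sum>b\<in>B. F a b c d)"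
    by (rule sum.cong[OF refl], rule sum.swap)
  finally show ?thesis .
qed

lemma sum3_rot: "(\<Sum>a\<in>A. \<Sum>b\<in>B. \<Sum>c\<in>C. F a b c) = (\<Sum>c\<in>C. \<Sum>a\<in>A. \<Sum>b\<in>B. F a b c)"
proof -
  have "(\<Sum>a\<in>A. \<Sum>b\<in>B. \<Sum>c\<in>C. F a b c) = (\<Sum>a\<in>A. \<Sum>c\<in>C. \<Sum>b\<in>B. F a b c)"
    by (rule sum.cong[OF refl], rule sum.swap)
  also have "\<dots> = (\<Sum>c\<in>C. \<Sum>a\<in>A. \<Sum>b\<in>B. F a b c)" by (rule sum.swap)
  finally show ?thesis .
qed

lemma assocR_ev[simp]: "assocR (ev ((a,b),c)) = (ev (a,(b,c)) :: _ \<Rightarrow> 'k::field)"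
  by (auto simp: assocR_def ev_def fun_eq_iff)
lemma assocR_tens[simp]: "assocR (tens (tens x y) z) = tens x (tens y z)"
  by (simp add: assocR_def tens_def fun_eq_iff mult.assoc)
lemma assocR_tmap: "assocR (tmap (tmap f g) h w) = tmap f (tmap g h) (assocR (w :: ('a::finite \<times> 'b::finite) \<times> 'c::finite \<Rightarrow> 'k::field))"
proof -
  have "(\<lambda>w. assocR (tmap (tmap f g) h w)) = (\<lambda>w :: ('a \<times> 'b) \<times> 'c \<Rightarrow> 'k. tmap f (tmap g h) (assocR w))"
  proof (rule lin_ext[OF lin_comp'[OF lin_assocR lin_tmap] lin_comp'[OF lin_tmap lin_assocR]])
    fix s :: "('a \<times> 'b) \<times> 'c"
    obtain a b c where "s = ((a,b),c)" by (metis prod.collapse)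
    thus "assocR (tmap (tmap f g) h (ev s)) = tmap f (tmap g h) (assocR (ev s))"
      by (simp add: tmap_ev)
  qed
  from fun_cong[OF this, of w] show ?thesis by simp
qed



locale S5 =
  fixes m :: "('i::finite \<Rightarrow> 'k::field) \<Rightarrow> ('i \<Rightarrow> 'k) \<Rightarrow> ('i \<Rightarrow> 'k)"
    and one :: "'i \<Rightarrow> 'k"
    and aA :: "('i \<Rightarrow> 'k) \<Rightarrow> ('i \<Rightarrow> 'k)"
    and aH :: "('j::finite \<Rightarrow> 'k) \<Rightarrow> ('j \<Rightarrow> 'k)"
    and dH :: "('j \<Rightarrow> 'k) \<Rightarrow> ('j \<times> 'j \<Rightarrow> 'k)"
    and eH :: "('j \<Rightarrow> 'k) \<Rightarrow> 'k"
    and phi :: "('i \<times> 'j \<Rightarrow> 'k) \<Rightarrow> ('j \<times> 'i \<Rightarrow> 'k)"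
    and Phi :: "('j \<times> 'i \<Rightarrow> 'k) \<Rightarrow> ('i \<times> 'j \<Rightarrow> 'k)"
  assumes A: "hom_algebra m one aA"
    and H: "hom_coalgebra aH dH eH"
    and lin_phi: "lin phi"
    and lin_Phi: "lin Phi"
    and corr: "\<forall>f a h. (\<lambda>j. \<Sum>i\<in>UNIV. f i * Phi (tens h a) (i, j))
                     = (\<lambda>j. \<Sum>i\<in>UNIV. phi (tens f h) (j, i) * a i)"
begin

abbreviation "ai \<equiv> inv aA"
abbreviation "aB \<equiv> dual_alpha aA"
abbreviation "dB \<equiv> dual_delta m aA"
abbreviation "eB \<equiv> dual_eps one"

lemma bilin_m: "bilin m" and lin_aA: "lin aA" and bij_aA: "bij aA"
  using A by (auto simp: hom_algebra_def)
lemma lin_aH: "lin aH" and bij_aH: "bij aH" and lin_dH: "lin dH" and lin1_eH: "lin1 eH"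
  using H by (auto simp: hom_coalgebra_def)
lemma lin_ai: "lin ai" by (rule lin_inv[OF lin_aA bij_aA])
lemma aA_ai[simp]: "aA (ai x) = x" using bij_aA by (simp add: bij_is_surj surj_f_inv_f)
lemma ai_aA[simp]: "ai (aA x) = x" using bij_aA by (simp add: bij_is_inj)
lemma aH_inv[simp]: "aH (inv aH x) = x" using bij_aH by (simp add: bij_is_surj surj_f_inv_f)
lemma inv_aH[simp]: "inv aH (aH x) = x" using bij_aH by (simp add: bij_is_inj)
lemma lin_aHi: "lin (inv aH)" by (rule lin_inv[OF lin_aH bij_aH])

lemma lin_aB: "lin aB"
  by (simp add: lin_def dual_alpha_def pair_def fun_eq_iff sum_distrib_left sum.distrib algebra_simps)
lemma lin_dB: "lin dB"
  by (simp add: lin_def dual_delta_def pair_def fun_eq_iff sum_distrib_left sum.distrib algebra_simps)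
lemma lin1_eB: "lin1 eB"
  by (simp add: lin1_def dual_eps_def pair_def sum_distrib_left sum.distrib algebra_simps)
lemma aB_ev[simp]: "aB (ev p) i = ai (ev i) p" by (simp add: dual_alpha_def)
lemma dB_ev[simp]: "dB (ev i) (x,y) = ai (ai (m (ev y) (ev x))) i" by (simp add: dual_delta_def)
lemma eB_ev[simp]: "eB (ev i) = one i" by (simp add: dual_eps_def)

definition K where "K q i p j = Phi (ev (q,i)) (p,j)"

lemma phi_ev[simp]: "phi (ev (p,q)) (j,i) = K q i p j"
  unfolding K_def using fun_cong[OF corr[rule_format, where f="ev p" and a="ev i" and h="ev q"], of j] by simp

lemma phi_coord: "phi w (j,i) = (\<Sum>p\<in>UNIV. \<Sum>q\<in>UNIV. w (p,q) * K q i p j)"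
  by (subst lin_expand[OF lin_phi]) (simp add: sum_UNIV_prod)
lemma Phi_coord: "Phi w (p,j) = (\<Sum>q\<in>UNIV. \<Sum>i\<in>UNIV. w (q,i) * K q i p j)"
  by (subst lin_expand[OF lin_Phi]) (simp add: sum_UNIV_prod K_def)

end

context S5 begin

lemma c0_1: "phi (tmap aB aH (ev (p,q))) (j,i) = tmap ai id (Phi (tens (aH (ev q)) (ev i))) (p,j)"
  apply (simp add: tmap_ev phi_coord tens_def tmap_idR Phi_coord)
  apply (simp add: sum_distrib_left sum_distrib_right mult_ac)
  done

lemma c0_2: "tmap aH aB (phi (ev (p,q))) (j,i) = tmap id aH (Phi (tens (ev q) (ai (ev i)))) (p,j)"
  apply (simp add: tmap_coord tmap_idL)
  apply (simp add: tens_def Phi_coord coll)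
  apply (simp add: sum_distrib_left sum_distrib_right mult_ac)
  done


lemma compat_iff: "(\<forall>w. phi (tmap aB aH w) = tmap aH aB (phi w)) \<longleftrightarrow>
   (\<forall>w. tmap aA aH (Phi w) = Phi (tmap aH aA w))" (is "?L \<longleftrightarrow> ?R")
proof -
  have "?L \<longleftrightarrow> (\<forall>s c. phi (tmap aB aH (ev s)) c = tmap aH aB (phi (ev s)) c)"
    by (rule all_basis_iff[OF lin_comp'[OF lin_phi lin_tmap] lin_comp'[OF lin_tmap lin_phi]])
  also have "\<dots> \<longleftrightarrow> (\<forall>q i p j. tmap ai id (Phi (tens (aH (ev q)) (ev i))) (p,j) = tmap id aH (Phi (tens (ev q) (ai (ev i)))) (p,j))"
    by (auto simp: c0_1 c0_2)
  also have "\<dots> \<longleftrightarrow> (\<forall>x y. tmap ai id (Phi (tmap aH id (tens x y))) = tmap id aH (Phi (tmap id ai (tens x y))))"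
    by (subst tens_basis_iff[OF lin_comp'[OF lin_tmap lin_comp'[OF lin_Phi lin_tmap]] lin_comp'[OF lin_tmap lin_comp'[OF lin_Phi lin_tmap]]])
       (auto simp: tmap_ev)
  also have "\<dots> \<longleftrightarrow> (\<forall>x y. tmap ai id (Phi (tens (aH x) y)) = tmap id aH (Phi (tens x (ai y))))"
    by (simp add: tmap_tens lin_aH lin_ai)
  also have "\<dots> \<longleftrightarrow> (\<forall>x y. tmap aA aH (Phi (tens x y)) = Phi (tens (aH x) (aA y)))"
  proof safe
    fix x y assume h: "\<forall>x y. tmap ai id (Phi (tens (aH x) y)) = tmap id aH (Phi (tens x (ai y)))"
    have "Phi (tens (aH x) (aA y)) = tmap aA id (tmap ai id (Phi (tens (aH x) (aA y))))"
      by (simp add: tmap_comp lin_aA comp_def)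
    also have "\<dots> = tmap aA id (tmap id aH (Phi (tens x y)))" using h by simp
    also have "\<dots> = tmap aA aH (Phi (tens x y))" by (simp add: tmap_comp lin_aA comp_def)
    finally show "tmap aA aH (Phi (tens x y)) = Phi (tens (aH x) (aA y))" by simp
  next
    fix x y assume h: "\<forall>x y. tmap aA aH (Phi (tens x y)) = Phi (tens (aH x) (aA y))"
    have "tmap ai id (Phi (tens (aH x) y)) = tmap ai id (Phi (tens (aH x) (aA (ai y))))" by simp
    also have "\<dots> = tmap ai id (tmap aA aH (Phi (tens x (ai y))))" using h by simp
    also have "\<dots> = tmap id aH (Phi (tens x (ai y)))" by (simp add: tmap_comp lin_ai comp_def)
    finally show "tmap ai id (Phi (tens (aH x) y)) = tmap id aH (Phi (tens x (ai y)))" .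
  qed
  also have "\<dots> \<longleftrightarrow> ?R"
  proof -
    have "(\<forall>x y. tmap aA aH (Phi (tens x y)) = Phi (tmap aH aA (tens x y))) \<longleftrightarrow> ?R"
      by (subst tens_basis_iff[OF lin_comp'[OF lin_tmap lin_Phi] lin_comp'[OF lin_Phi lin_tmap]])
         (simp add: all_basis_iff[OF lin_comp'[OF lin_tmap lin_Phi] lin_comp'[OF lin_Phi lin_tmap]])
    thus ?thesis by (simp add: tmap_tens lin_aH lin_aA)
  qed
  finally show ?thesis .
qed

end

context S5 begin

lemma M3_iff: "(\<forall>b h. contrL eH (phi (tens b h)) = (\<lambda>i. eH h * b i)) \<longleftrightarrow>
   (\<forall>a h. contrR eH (Phi (tens h a)) = (\<lambda>i. eH h * a i))"
proof -
  have "(\<forall>b h. contrL eH (phi (tens b h)) = (\<lambda>i. eH h * b i)) \<longleftrightarrow>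
      (\<forall>b h. contrL eH (phi (tens b h)) = contrR eH (tens b h))"
    by (simp add: contrR_tens[OF lin1_eH] mult.commute)
  also have "\<dots> \<longleftrightarrow> (\<forall>p q i. (\<Sum>j\<in>UNIV. K q i p j * eH (ev j)) = (if i = p then eH (ev q) else 0))"
    by (subst tens_basis_iff[OF lin_comp'[OF lin_contrL lin_phi] lin_contrR])
       (simp add: contrL_def contrR_def coll)
  also have "\<dots> \<longleftrightarrow> (\<forall>h a. contrR eH (Phi (tens h a)) = contrL eH (tens h a))"
    by (subst tens_basis_iff[OF lin_comp'[OF lin_contrR lin_Phi] lin_contrL])
       (auto simp: contrL_def contrR_def coll Phi_coord)
  also have "\<dots> \<longleftrightarrow> (\<forall>a h. contrR eH (Phi (tens h a)) = (\<lambda>i. eH h * a i))"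
    by (auto simp: contrL_tens[OF lin1_eH])
  finally show ?thesis .
qed

lemma M4_iff: "(\<forall>b h. contrR eB (phi (tens b h)) = (\<lambda>j. eB b * h j)) \<longleftrightarrow>
   (\<forall>h. Phi (tens h one) = tens one h)"
proof -
  have "(\<forall>b h. contrR eB (phi (tens b h)) = (\<lambda>j. eB b * h j)) \<longleftrightarrow>
      (\<forall>b h. contrR eB (phi (tens b h)) = contrL eB (tens b h))"
    by (simp add: contrL_tens[OF lin1_eB])
  also have "\<dots> \<longleftrightarrow> (\<forall>p q j. (\<Sum>i\<in>UNIV. K q i p j * one i) = (if j = q then one p else 0))"
    by (subst tens_basis_iff[OF lin_comp'[OF lin_contrR lin_phi] lin_contrL])
       (simp add: contrL_def contrR_def coll)
  also have "\<dots> \<longleftrightarrow> (\<forall>h. Phi (tens h one) = tens one h)"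
    by (subst all_basis_iff[OF lin_comp'[OF lin_Phi lin_tensL] lin_tensR])
       (auto simp: tens_def coll Phi_coord mult.commute)
  finally show ?thesis .
qed

end

context S5 begin

lemma c2_1: "assocL (tmap id phi (assocR (tmap phi id (assocL (tmap aB dH (ev (p,q))))))) ((j1,j2),i)
   = tmap ai id (assocR (tmap Phi id (assocL (tmap id Phi (assocR (tmap dH id (ev (q,i)))))))) (p,(j1,j2))"
  apply (simp add: tmap_ev assocL_def assocR_def tmap_idL tmap_idR sum_UNIV_prod tens_def)
  apply (simp add: Phi_coord coll)
  apply (simp add: sum_distrib_left sum_distrib_right mult_ac)
  apply (subst sum4_perm)
  apply (simp add: mult_ac)
  done

lemma c2_2: "tmap dH aB (phi (ev (p,q))) ((j1,j2),i) = tmap id dH (Phi (tmap id ai (ev (q,i)))) (p,(j1,j2))"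
  apply (simp add: tmap_coord tmap_idL sum_UNIV_prod tmap_ev)
  apply (simp add: tens_def Phi_coord coll)
  apply (simp add: sum_distrib_left sum_distrib_right mult_ac)
  done


lemma M2_iff: "(\<forall>b h. assocL (tmap id phi (assocR (tmap phi id (assocL (tens (aB b) (dH h)))))) = tmap dH aB (phi (tens b h)))
  \<longleftrightarrow> (\<forall>a h. assocR (tmap Phi id (assocL (tmap id Phi (assocR (tens (dH h) (aA a)))))) = tmap aA dH (Phi (tens h a)))"
  (is "?L \<longleftrightarrow> ?R")
proof -
  have "?L \<longleftrightarrow> (\<forall>x y. assocL (tmap id phi (assocR (tmap phi id (assocL (tmap aB dH (tens x y)))))) = tmap dH aB (phi (tens x y)))"
    by (simp add: tmap_tens lin_aB lin_dH)
  also have "\<dots> \<longleftrightarrow> (\<forall>x y. tmap ai id (assocR (tmap Phi id (assocL (tmap id Phi (assocR (tmap dH id (tens x y)))))))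
         = tmap id dH (Phi (tmap id ai (tens x y))))"
    apply (subst tens_basis_iff[OF lin_comp'[OF lin_assocL lin_comp'[OF lin_tmap lin_comp'[OF lin_assocR lin_comp'[OF lin_tmap lin_comp'[OF lin_assocL lin_tmap]]]]] lin_comp'[OF lin_tmap lin_phi]])
    apply (subst tens_basis_iff[OF lin_comp'[OF lin_tmap lin_comp'[OF lin_assocR lin_comp'[OF lin_tmap lin_comp'[OF lin_assocL lin_comp'[OF lin_tmap lin_comp'[OF lin_assocR lin_tmap]]]]]] lin_comp'[OF lin_tmap lin_comp'[OF lin_Phi lin_tmap]]])
    apply (auto simp: c2_1 c2_2)
    done
  also have "\<dots> \<longleftrightarrow> (\<forall>h a. tmap ai id (assocR (tmap Phi id (assocL (tmap id Phi (assocR (tens (dH h) a))))))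
         = tmap id dH (Phi (tens h (ai a))))"
    by (simp add: tmap_tens lin_dH lin_ai)
  also have "\<dots> \<longleftrightarrow> ?R"
  proof safe
    fix a h assume q: "\<forall>h a. tmap ai id (assocR (tmap Phi id (assocL (tmap id Phi (assocR (tens (dH h) a))))))
         = tmap id dH (Phi (tens h (ai a)))"
    let ?X = "assocR (tmap Phi id (assocL (tmap id Phi (assocR (tens (dH h) (aA a))))))"
    have "?X = tmap aA id (tmap ai id ?X)" by (simp add: tmap_comp lin_aA comp_def)
    also have "\<dots> = tmap aA id (tmap id dH (Phi (tens h a)))" using q by simp
    also have "\<dots> = tmap aA dH (Phi (tens h a))" by (simp add: tmap_comp lin_aA comp_def)
    finally show "?X = tmap aA dH (Phi (tens h a))" .
  next
    fix h a assume r: ?R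
    have "tmap ai id (assocR (tmap Phi id (assocL (tmap id Phi (assocR (tens (dH h) a))))))
       = tmap ai id (assocR (tmap Phi id (assocL (tmap id Phi (assocR (tens (dH h) (aA (ai a))))))))" by simp
    also have "\<dots> = tmap ai id (tmap aA dH (Phi (tens h (ai a))))" using r[rule_format, where a="ai a" and h=h] by simp
    also have "\<dots> = tmap id dH (Phi (tens h (ai a)))" by (simp add: tmap_comp lin_ai comp_def)
    finally show "tmap ai id (assocR (tmap Phi id (assocL (tmap id Phi (assocR (tens (dH h) a))))))
         = tmap id dH (Phi (tens h (ai a)))" .
  qed
  finally show ?thesis .
qed

end

context S5 begin

lemma c1_1: "assocR (tmap phi id (assocL (tmap id phi (assocR (tmap dB aH (ev (p,q))))))) (j,(x,y))
  = tmap (\<lambda>v. ai (ai (mlin m v))) id (assocL (tmap id Phi (assocR (tmap Phi id (tmap (tmap aH id) id (ev ((q,y),x))))))) (p,j)"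
  apply (simp add: tmap_ev assocL_def assocR_def tmap_idL tmap_idR sum_UNIV_prod tens_def mlin_ev)
  apply (simp add: Phi_coord coll)
  apply (simp add: sum_distrib_left sum_distrib_right mult_ac)
  apply (rule trans[OF sum3_rot])
  apply (simp add: mult_ac)
  done

lemma c1_2: "tmap aH dB (phi (ev (p,q))) (j,(x,y))
  = tmap id aH (Phi (tmap id (\<lambda>v. ai (ai (mlin m v))) (assocR (ev ((q,y),x))))) (p,j)"
  apply (simp add: tmap_coord tmap_idL sum_UNIV_prod tmap_ev assocR_def)
  apply (simp add: tens_def Phi_coord coll mlin_ev)
  apply (simp add: sum_distrib_left sum_distrib_right mult_ac)
  done


lemma lin_AA: "lin (\<lambda>x. aA (aA x))" by (rule lin_comp'[OF lin_aA lin_aA])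
lemma lin_II: "lin (\<lambda>x. ai (ai x))" by (rule lin_comp'[OF lin_ai lin_ai])

lemma M1_iff: assumes cp: "\<forall>w. tmap aA aH (Phi w) = Phi (tmap aH aA w)"
  shows "(\<forall>b h. assocR (tmap phi id (assocL (tmap id phi (assocR (tens (dB b) (aH h)))))) = tmap aH dB (phi (tens b h)))
  \<longleftrightarrow> (\<forall>a b h. tmap (mlin m) aH (assocL (tmap id Phi (assocR (tmap Phi id (tens (tens h a) b))))) = Phi (tens (aH h) (m a b)))"
  (is "?L \<longleftrightarrow> ?R")
proof -
  define G where "G = (\<lambda>v. ai (ai (mlin m v)))"
  define QL where "QL = (\<lambda>w :: ('j \<times> 'i) \<times> 'i \<Rightarrow> 'k. tmap G id (assocL (tmap id Phi (assocR (tmap Phi id (tmap (tmap aH id) id w))))))"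
  define QR where "QR = (\<lambda>w :: ('j \<times> 'i) \<times> 'i \<Rightarrow> 'k. tmap id aH (Phi (tmap id G (assocR w))))"
  define EL where "EL = (\<lambda>w :: ('j \<times> 'i) \<times> 'i \<Rightarrow> 'k. tmap (mlin m) aH (assocL (tmap id Phi (assocR (tmap Phi id w)))))"
  define ER where "ER = (\<lambda>w :: ('j \<times> 'i) \<times> 'i \<Rightarrow> 'k. Phi (tmap aH (mlin m) (assocR w)))"
  define T where "T = tmap (tmap aH (id :: ('i \<Rightarrow> 'k) \<Rightarrow> _)) (id :: ('i \<Rightarrow> 'k) \<Rightarrow> _)"
  have linQL: "lin QL" unfolding QL_def
    by (rule lin_comp'[OF lin_tmap lin_comp'[OF lin_assocL lin_comp'[OF lin_tmap lin_comp'[OF lin_assocR lin_comp'[OF lin_tmap lin_tmap]]]]])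
  have linQR: "lin QR" unfolding QR_def
    by (rule lin_comp'[OF lin_tmap lin_comp'[OF lin_Phi lin_comp'[OF lin_tmap lin_assocR]]])
  have linEL: "lin EL" unfolding EL_def
    by (rule lin_comp'[OF lin_tmap lin_comp'[OF lin_assocL lin_comp'[OF lin_tmap lin_comp'[OF lin_assocR lin_tmap]]]])
  have linER: "lin ER" unfolding ER_def
    by (rule lin_comp'[OF lin_Phi lin_comp'[OF lin_tmap lin_assocR]])
  have s1: "?L \<longleftrightarrow> (\<forall>x y. assocR (tmap phi id (assocL (tmap id phi (assocR (tmap dB aH (tens x y)))))) = tmap aH dB (phi (tens x y)))"
    by (simp add: tmap_tens lin_dB lin_aH)
  also have "\<dots> \<longleftrightarrow> (\<forall>w. QL w = QR w)"
    apply (subst tens_basis_iff[OF lin_comp'[OF lin_assocR lin_comp'[OF lin_tmap lin_comp'[OF lin_assocL lin_comp'[OF lin_tmap lin_comp'[OF lin_assocR lin_tmap]]]]] lin_comp'[OF lin_tmap lin_phi]])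
    apply (subst all_basis_iff[OF linQL linQR])
    apply (auto simp: c1_1 c1_2 QL_def QR_def G_def)
    done
  also have "\<dots> \<longleftrightarrow> (\<forall>w. EL w = ER w)"
  proof -
    have QLf: "tmap (\<lambda>x. aA (aA x)) aH (QL w) = EL (T w)" for w
      unfolding QL_def EL_def T_def G_def by (simp add: tmap_comp lin_AA lin_aH comp_def)
    have QRf: "tmap (\<lambda>x. aA (aA x)) aH (QR w) = ER (T w)" for w
    proof -
      let ?Z = "tmap id G (assocR w)"
      have "tmap (\<lambda>x. aA (aA x)) aH (QR w) = tmap (\<lambda>x. aA (aA x)) (\<lambda>x. aH (aH x)) (Phi ?Z)"
        unfolding QR_def by (simp add: tmap_comp lin_AA lin_aH comp_def)
      also have "\<dots> = tmap aA aH (tmap aA aH (Phi ?Z))"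
        by (simp add: tmap_comp lin_aA lin_aH comp_def)
      also have "\<dots> = Phi (tmap aH aA (tmap aH aA ?Z))" using cp by simp
      also have "\<dots> = Phi (tmap (\<lambda>x. aH (aH x)) (mlin m) (assocR w))"
        by (simp add: tmap_comp lin_aA lin_aH comp_def G_def)
      also have "\<dots> = ER (T w)"
        unfolding ER_def T_def by (simp add: assocR_tmap tmap_comp lin_aH comp_def)
      finally show ?thesis .
    qed
    have inj: "tmap (\<lambda>x. ai (ai x)) (inv aH) (tmap (\<lambda>x. aA (aA x)) aH X) = X" for X :: "'i \<times> 'j \<Rightarrow> 'k"
      by (simp add: tmap_comp lin_II lin_aHi comp_def)
    have surj: "T (tmap (tmap (inv aH) id) id w) = w" for w :: "('j \<times> 'i) \<times> 'i \<Rightarrow> 'k"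
      unfolding T_def by (simp add: tmap_comp lin_aH comp_def)
    show ?thesis
    proof safe
      fix w :: "('j \<times> 'i) \<times> 'i \<Rightarrow> 'k" assume Q: "\<forall>w. QL w = QR w"
      define w0 where "w0 = tmap (tmap (inv aH) id) id w"
      have "EL w = EL (T w0)" unfolding w0_def surj ..
      also have "\<dots> = ER (T w0)" using QLf[of w0] QRf[of w0] Q by simp
      also have "\<dots> = ER w" unfolding w0_def surj ..
      finally show "EL w = ER w" .
    next
      fix w :: "('j \<times> 'i) \<times> 'i \<Rightarrow> 'k" assume E: "\<forall>w. EL w = ER w"
      have "QL w = tmap (\<lambda>x. ai (ai x)) (inv aH) (EL (T w))" by (metis inj QLf)
      also have "\<dots> = tmap (\<lambda>x. ai (ai x)) (inv aH) (ER (T w))" using E by simp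
      also have "\<dots> = QR w" by (metis inj QRf)
      finally show "QL w = QR w" .
    qed
  qed
  also have "\<dots> \<longleftrightarrow> ?R"
  proof -
    have ERt: "ER (tens (tens h a) b) = Phi (tens (aH h) (m a b))" for h a b
      unfolding ER_def by (simp add: tmap_tens lin_aH mlin_tens[OF bilin_m])
    show ?thesis
    proof
      assume "\<forall>w. EL w = ER w" thus ?R using ERt unfolding EL_def by metis
    next
      assume r: ?R
      have "\<forall>s c. EL (ev s) c = ER (ev s) c"
      proof (intro allI)
        fix s :: "('j \<times> 'i) \<times> 'i" and c
        obtain q a b where sd: "s = ((q,a),b)" by (metis prod.collapse)
        have "EL (tens (tens (ev q) (ev a)) (ev b)) = ER (tens (tens (ev q) (ev a)) (ev b))"
          using r ERt unfolding EL_def by metis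
        thus "EL (ev s) c = ER (ev s) c" using sd by simp
      qed
      thus "\<forall>w. EL w = ER w" by (subst all_basis_iff[OF linEL linER])
    qed
  qed
  finally show ?thesis .
qed

end

theorem theorem5p1:
  fixes m :: "('i::finite \<Rightarrow> 'k::field_char_0) \<Rightarrow> ('i \<Rightarrow> 'k) \<Rightarrow> ('i \<Rightarrow> 'k)"
    and one :: "'i \<Rightarrow> 'k"
    and aA :: "('i \<Rightarrow> 'k) \<Rightarrow> ('i \<Rightarrow> 'k)"
    and aH :: "('j::finite \<Rightarrow> 'k) \<Rightarrow> ('j \<Rightarrow> 'k)"
    and dH :: "('j \<Rightarrow> 'k) \<Rightarrow> ('j \<times> 'j \<Rightarrow> 'k)"
    and eH :: "('j \<Rightarrow> 'k) \<Rightarrow> 'k"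
    and phi :: "('i \<times> 'j \<Rightarrow> 'k) \<Rightarrow> ('j \<times> 'i \<Rightarrow> 'k)"
    and Phi :: "('j \<times> 'i \<Rightarrow> 'k) \<Rightarrow> ('i \<times> 'j \<Rightarrow> 'k)"
  assumes A: "hom_algebra m one aA"
    and H: "hom_coalgebra aH dH eH"
    and lin_phi: "lin phi"
    and lin_Phi: "lin Phi"
    and corr: "\<forall>f a h. (\<lambda>j. \<Sum>i\<in>UNIV. f i * Phi (tens h a) (i, j))
                     = (\<lambda>j. \<Sum>i\<in>UNIV. phi (tens f h) (j, i) * a i)"
  shows "hom_cotwistor (dual_alpha aA) (dual_delta m aA) (dual_eps one) aH dH eH phi \<longleftrightarrow>
    ((\<forall>w. tmap aA aH (Phi w) = Phi (tmap aH aA w)) \<and>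
     (\<forall>a b h. tmap (mlin m) aH (assocL (tmap id Phi (assocR (tmap Phi id (tens (tens h a) b)))))
               = Phi (tens (aH h) (m a b))) \<and>
     (\<forall>a h. assocR (tmap Phi id (assocL (tmap id Phi (assocR (tens (dH h) (aA a))))))
               = tmap aA dH (Phi (tens h a))) \<and>
     (\<forall>a h. contrR eH (Phi (tens h a)) = (\<lambda>i. eH h * a i)) \<and>
     (\<forall>h. Phi (tens h one) = tens one h))"
proof -
  interpret S5 m one aA aH dH eH phi Phi
    using A H lin_phi lin_Phi corr by (rule S5.intro)
  show ?thesis
    unfolding hom_cotwistor_def
    using compat_iff M1_iff M2_iff M3_iff M4_iff lin_phi by blast
qed

end
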